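(* Let $L_0<L_1$, $\varepsilon>0$, and for $h=\frac{L_1-L_0}{J}$ ($J\in\mathbb{N}^*$) let the time step $l=l(h)>0$ satisfy $l=o(h^{2+\varepsilon})$ as $h\to0$; set $\sigma=\frac{2l}{h^2}$. Let $(\alpha_n)_n$ be a sequence in $[0,1]$ and let $A_n\in\mathcal{M}_{J+1}(\mathbb{C})$ be the tridiagonal matrix (indices $0,\dots,J$) with $A_n(j,j)=\frac{i-4\sigma\alpha_n}{2}$, $A_n(j,j-1)=A_n(j,j+1)=\sigma\alpha_n$, except $A_n(0,1)=A_n(J,J-1)=2\sigma\alpha_n$, other entries zero. Let $\mathcal{L}_{A_n}(X)=A_nX+XA_n^T$. Then there is a constant $C>0$ such that for $h$ small enough, for all $n$ and all $X\in\mathcal{M}_{J+1}(\mathbb{R})$, $$\frac12\|X\|\leq(1-Ch^{\varepsilon})\|X\|\leq\|\mathcal{L}_{A_n}(X)\|\leq(1+Ch^{\varepsilon})\|X\|\leq\frac32\|X\|.$$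
   Context: $\|\cdot\|$ denotes the matrix norm used in the paper (e.g. the Frobenius norm $\|X\|=(\sum_{j,m}|X_{j,m}|^2)^{1/2}$). $A_n$ is the matrix multiplying the new time level in a finite-difference scheme for the 2D NLS equation with Neumann boundary conditions. *)

theory Defs
  imports "HOL-Analysis.Analysis"
begin

text \<open>Matrices in M_{J+1} are represented as functions nat => nat => 'a,
  only the entries with indices in {0..J} being relevant.\<close>

definition frob_norm :: "nat \<Rightarrow> (nat \<Rightarrow> nat \<Rightarrow> 'a::real_normed_vector) \<Rightarrow> real" where
  "frob_norm J X = sqrt (\<Sum>j\<in>{0..J}. \<Sum>m\<in>{0..J}. (norm (X j m))\<^sup>2)"

definition A_mat :: "nat \<Rightarrow> real \<Rightarrow> real \<Rightarrow> nat \<Rightarrow> nat \<Rightarrow> complex" where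
  "A_mat J \<sigma> a j k =
     (if j = k then (\<i> - complex_of_real (4 * \<sigma> * a)) / 2
      else if (j = 0 \<and> k = 1) \<or> (j = J \<and> k + 1 = J) then complex_of_real (2 * \<sigma> * a)
      else if k = j + 1 \<or> j = k + 1 then complex_of_real (\<sigma> * a)
      else 0)"

definition L_op :: "nat \<Rightarrow> (nat \<Rightarrow> nat \<Rightarrow> complex) \<Rightarrow> (nat \<Rightarrow> nat \<Rightarrow> complex) \<Rightarrow> nat \<Rightarrow> nat \<Rightarrow> complex" where
  "L_op J A X j m = (\<Sum>k\<in>{0..J}. A j k * X k m) + (\<Sum>k\<in>{0..J}. X j k * A m k)"

end

theory Submission imports Defs begin


lemma cs_weighted:
  fixes w x :: "nat \<Rightarrow> real"
  shows "(\<Sum>k\<in>I. w k * x k)\<^sup>2 \<le> (\<Sum>k\<in>I. \<bar>w k\<bar>) * (\<Sum>k\<in>I. \<bar>w k\<bar> * (x k)\<^sup>2)"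
proof -
  have e: "w k * x k = sqrt \<bar>w k\<bar> * (sqrt \<bar>w k\<bar> * sgn (w k) * x k)" for k
  proof -
    have "sqrt \<bar>w k\<bar> * sqrt \<bar>w k\<bar> = \<bar>w k\<bar>" by simp
    then show ?thesis by (simp add: mult.assoc[symmetric] abs_mult_sgn[of "w k"])
  qed
  have "(\<Sum>k\<in>I. w k * x k)\<^sup>2 = (\<Sum>k\<in>I. sqrt \<bar>w k\<bar> * (sqrt \<bar>w k\<bar> * sgn (w k) * x k))\<^sup>2"
    by (simp add: e)
  also have "\<dots> \<le> (\<Sum>k\<in>I. (sqrt \<bar>w k\<bar>)\<^sup>2) * (\<Sum>k\<in>I. (sqrt \<bar>w k\<bar> * sgn (w k) * x k)\<^sup>2)"
    by (rule Cauchy_Schwarz_ineq_sum)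
  also have "\<dots> = (\<Sum>k\<in>I. \<bar>w k\<bar>) * (\<Sum>k\<in>I. \<bar>w k\<bar> * (x k)\<^sup>2)"
  proof -
    have "(sqrt \<bar>w k\<bar> * sgn (w k) * x k)\<^sup>2 = \<bar>w k\<bar> * (x k)\<^sup>2" for k
      by (cases "w k = 0") (simp_all add: power_mult_distrib sgn_if)
    then show ?thesis by simp
  qed
  finally show ?thesis .
qed

lemma schur:
  fixes b :: "nat \<Rightarrow> nat \<Rightarrow> real" and x :: "nat \<Rightarrow> real"
  assumes fin: "finite I" and R: "R \<ge> 0"
    and row: "\<And>j. j \<in> I \<Longrightarrow> (\<Sum>k\<in>I. \<bar>b j k\<bar>) \<le> R"
    and col: "\<And>k. k \<in> I \<Longrightarrow> (\<Sum>j\<in>I. \<bar>b j k\<bar>) \<le> R"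
  shows "(\<Sum>j\<in>I. (\<Sum>k\<in>I. b j k * x k)\<^sup>2) \<le> R\<^sup>2 * (\<Sum>k\<in>I. (x k)\<^sup>2)"
proof -
  have "(\<Sum>j\<in>I. (\<Sum>k\<in>I. b j k * x k)\<^sup>2) \<le> (\<Sum>j\<in>I. R * (\<Sum>k\<in>I. \<bar>b j k\<bar> * (x k)\<^sup>2))"
  proof (rule sum_mono)
    fix j assume j: "j \<in> I"
    have "(\<Sum>k\<in>I. b j k * x k)\<^sup>2 \<le> (\<Sum>k\<in>I. \<bar>b j k\<bar>) * (\<Sum>k\<in>I. \<bar>b j k\<bar> * (x k)\<^sup>2)"
      by (rule cs_weighted)
    also have "\<dots> \<le> R * (\<Sum>k\<in>I. \<bar>b j k\<bar> * (x k)\<^sup>2)"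
      by (rule mult_right_mono[OF row[OF j]]) (simp add: sum_nonneg)
    finally show "(\<Sum>k\<in>I. b j k * x k)\<^sup>2 \<le> R * (\<Sum>k\<in>I. \<bar>b j k\<bar> * (x k)\<^sup>2)" .
  qed
  also have "\<dots> = R * (\<Sum>j\<in>I. \<Sum>k\<in>I. \<bar>b j k\<bar> * (x k)\<^sup>2)"
    by (simp add: sum_distrib_left)
  also have "\<dots> = R * (\<Sum>k\<in>I. \<Sum>j\<in>I. \<bar>b j k\<bar> * (x k)\<^sup>2)"
    by (rule arg_cong[where f="\<lambda>t. R * t"], rule sum.swap)
  also have "\<dots> = R * (\<Sum>k\<in>I. (\<Sum>j\<in>I. \<bar>b j k\<bar>) * (x k)\<^sup>2)"
    by (simp add: sum_distrib_right)
  also have "\<dots> \<le> R * (\<Sum>k\<in>I. R * (x k)\<^sup>2)"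
    by (rule mult_left_mono[OF sum_mono[OF mult_right_mono[OF col]] R]) auto
  also have "\<dots> = R\<^sup>2 * (\<Sum>k\<in>I. (x k)\<^sup>2)"
    by (simp add: sum_distrib_left power2_eq_square mult.assoc)
  finally show ?thesis .
qed

definition Bm :: "nat \<Rightarrow> nat \<Rightarrow> nat \<Rightarrow> real" where
  "Bm J j k = (if j = k then -2
      else if (j = 0 \<and> k = 1) \<or> (j = J \<and> k + 1 = J) then 2
      else if k = j + 1 \<or> j = k + 1 then 1 else 0)"

lemma Bm_bound: "\<bar>Bm J j k\<bar> \<le> (if k \<in> {j-1, j, j+1} then 2 else 0)"
  by (auto simp: Bm_def)

lemma Bm_bound': "\<bar>Bm J j k\<bar> \<le> (if j \<in> {k-1, k, k+1} then 2 else 0)"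
  by (auto simp: Bm_def)

lemma sum_ind3: "(\<Sum>k\<in>{0..J}. (if k \<in> {a, b, c::nat} then 2 else 0::real)) \<le> 6"
proof -
  have "(\<Sum>k\<in>{0..J}. (if k \<in> {a, b, c::nat} then 2 else 0::real)) = 2 * real (card ({0..J} \<inter> {a,b,c}))"
    unfolding sum.If_cases[OF finite_atLeastAtMost] Collect_mem_eq by simp
  also have "card ({0..J} \<inter> {a,b,c}) \<le> card {a,b,c}"
    by (rule card_mono) auto
  also have "card {a,b,c} \<le> 3" by (simp add: card_insert_if)
  finally show ?thesis by simp
qed

lemma Bm_row: "(\<Sum>k\<in>{0..J}. \<bar>Bm J j k\<bar>) \<le> 6"
  by (rule order_trans[OF sum_mono[OF Bm_bound] sum_ind3])

lemma Bm_col: "(\<Sum>j\<in>{0..J}. \<bar>Bm J j k\<bar>) \<le> 6"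
  by (rule order_trans[OF sum_mono[OF Bm_bound'] sum_ind3])

lemma A_decomp: "A_mat J \<sigma> a j k = (if j = k then \<i>/2 else 0) + complex_of_real (\<sigma> * a * Bm J j k)"
  by (auto simp: A_mat_def Bm_def diff_divide_distrib)

lemma L_decomp:
  assumes "j \<le> J" "m \<le> J"
  shows "L_op J (A_mat J \<sigma> a) (\<lambda>j m. complex_of_real (X j m)) j m
    = Complex (\<sigma> * a * ((\<Sum>k\<in>{0..J}. Bm J j k * X k m) + (\<Sum>k\<in>{0..J}. X j k * Bm J m k))) (X j m)"
proof -
  have e1: "A_mat J \<sigma> a j k * complex_of_real (X k m) = (if j = k then \<i>/2 * X j m else 0) + complex_of_real (\<sigma> * a * (Bm J j k * X k m))" for k
    by (simp add: A_decomp distrib_right mult.assoc)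
  have e2: "complex_of_real (X j k) * A_mat J \<sigma> a m k = (if m = k then \<i>/2 * X j m else 0) + complex_of_real (\<sigma> * a * (X j k * Bm J m k))" for k
    by (simp add: A_decomp distrib_left mult.commute mult.left_commute)
  have 1: "(\<Sum>k\<in>{0..J}. A_mat J \<sigma> a j k * complex_of_real (X k m))
     = \<i>/2 * X j m + complex_of_real (\<sigma> * a * (\<Sum>k\<in>{0..J}. Bm J j k * X k m))"
    using assms by (simp only: e1 sum.distrib) (simp add: sum_distrib_left)
  have 2: "(\<Sum>k\<in>{0..J}. complex_of_real (X j k) * A_mat J \<sigma> a m k)
     = \<i>/2 * X j m + complex_of_real (\<sigma> * a * (\<Sum>k\<in>{0..J}. X j k * Bm J m k))"
    using assms by (simp only: e2 sum.distrib) (simp add: sum_distrib_left)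
  show ?thesis unfolding L_op_def 1 2
    by (simp add: complex_eq_iff algebra_simps)
qed


lemma norm_bound:
  fixes X :: "nat \<Rightarrow> nat \<Rightarrow> real"
  assumes s: "\<sigma> \<ge> 0" and a: "0 \<le> a" "a \<le> 1"
  shows "frob_norm J X \<le> frob_norm J (L_op J (A_mat J \<sigma> a) (\<lambda>j m. complex_of_real (X j m)))
   \<and> frob_norm J (L_op J (A_mat J \<sigma> a) (\<lambda>j m. complex_of_real (X j m))) \<le> (1 + 12 * \<sigma>) * frob_norm J X"
proof -
  define I where "I = {0..J}"
  define LX where "LX = L_op J (A_mat J \<sigma> a) (\<lambda>j m. complex_of_real (X j m))"
  define S1 where "S1 j m = (\<Sum>k\<in>I. Bm J j k * X k m)" for j m
  define S2 where "S2 j m = (\<Sum>k\<in>I. Bm J m k * X j k)" for j m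
  define SX where "SX = (\<Sum>j\<in>I. \<Sum>m\<in>I. (X j m)\<^sup>2)"
  have fin: "finite I" by (simp add: I_def)
  have SX0: "SX \<ge> 0" by (simp add: SX_def sum_nonneg)
  have nLX: "(norm (LX j m))\<^sup>2 = (X j m)\<^sup>2 + (\<sigma> * a)\<^sup>2 * (S1 j m + S2 j m)\<^sup>2" if "j \<in> I" "m \<in> I" for j m
  proof -
    have "LX j m = Complex (\<sigma> * a * (S1 j m + S2 j m)) (X j m)"
      using that unfolding LX_def S1_def S2_def I_def
      by (simp add: L_decomp mult.commute)
    then show ?thesis by (simp only: cmod_power2 complex.sel power_mult_distrib add.commute)
  qed
  have tot: "(\<Sum>j\<in>I. \<Sum>m\<in>I. (norm (LX j m))\<^sup>2) = SX + (\<sigma> * a)\<^sup>2 * (\<Sum>j\<in>I. \<Sum>m\<in>I. (S1 j m + S2 j m)\<^sup>2)"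
    by (simp add: nLX SX_def sum.distrib sum_distrib_left)
  have B1: "\<And>j. j \<in> I \<Longrightarrow> (\<Sum>k\<in>I. \<bar>Bm J j k\<bar>) \<le> 6" and B2: "\<And>k. k \<in> I \<Longrightarrow> (\<Sum>j\<in>I. \<bar>Bm J j k\<bar>) \<le> 6"
    unfolding I_def by (rule Bm_row, rule Bm_col)
  have q1: "(\<Sum>j\<in>I. \<Sum>m\<in>I. (S1 j m)\<^sup>2) \<le> 36 * SX"
  proof -
    have "(\<Sum>j\<in>I. \<Sum>m\<in>I. (S1 j m)\<^sup>2) = (\<Sum>m\<in>I. \<Sum>j\<in>I. (\<Sum>k\<in>I. Bm J j k * X k m)\<^sup>2)"
      unfolding S1_def by (rule sum.swap)
    also have "\<dots> \<le> (\<Sum>m\<in>I. 6\<^sup>2 * (\<Sum>k\<in>I. (X k m)\<^sup>2))"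
      by (rule sum_mono, rule schur[OF fin _ B1 B2]) auto
    also have "\<dots> = 36 * (\<Sum>m\<in>I. \<Sum>k\<in>I. (X k m)\<^sup>2)" by (simp add: sum_distrib_left)
    also have "\<dots> = 36 * SX" unfolding SX_def by (rule arg_cong[where f="\<lambda>t. 36 * t"], rule sum.swap)
    finally show ?thesis .
  qed
  have q2: "(\<Sum>j\<in>I. \<Sum>m\<in>I. (S2 j m)\<^sup>2) \<le> 36 * SX"
  proof -
    have "(\<Sum>j\<in>I. \<Sum>m\<in>I. (S2 j m)\<^sup>2) \<le> (\<Sum>j\<in>I. 6\<^sup>2 * (\<Sum>k\<in>I. (X j k)\<^sup>2))"
      unfolding S2_def by (rule sum_mono, rule schur[OF fin _ B1 B2]) auto
    also have "\<dots> = 36 * SX" unfolding SX_def by (simp add: sum_distrib_left)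
    finally show ?thesis .
  qed
  have q: "(\<Sum>j\<in>I. \<Sum>m\<in>I. (S1 j m + S2 j m)\<^sup>2) \<le> 144 * SX"
  proof -
    have "(\<Sum>j\<in>I. \<Sum>m\<in>I. (S1 j m + S2 j m)\<^sup>2) \<le> (\<Sum>j\<in>I. \<Sum>m\<in>I. 2 * (S1 j m)\<^sup>2 + 2 * (S2 j m)\<^sup>2)"
    proof (intro sum_mono)
      fix j m
      have "0 \<le> (S1 j m - S2 j m)\<^sup>2" by simp
      then show "(S1 j m + S2 j m)\<^sup>2 \<le> 2 * (S1 j m)\<^sup>2 + 2 * (S2 j m)\<^sup>2"
        by (simp add: power2_eq_square algebra_simps)
    qed
    also have "\<dots> = 2 * (\<Sum>j\<in>I. \<Sum>m\<in>I. (S1 j m)\<^sup>2) + 2 * (\<Sum>j\<in>I. \<Sum>m\<in>I. (S2 j m)\<^sup>2)"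
      by (simp add: sum.distrib sum_distrib_left)
    finally show ?thesis using q1 q2 by linarith
  qed
  have sa: "(\<sigma> * a)\<^sup>2 \<le> \<sigma>\<^sup>2"
    using s a by (intro power_mono) (auto intro: mult_left_le)
  have Q0: "0 \<le> (\<Sum>j\<in>I. \<Sum>m\<in>I. (S1 j m + S2 j m)\<^sup>2)" by (simp add: sum_nonneg)
  have up: "(\<Sum>j\<in>I. \<Sum>m\<in>I. (norm (LX j m))\<^sup>2) \<le> (1 + 12 * \<sigma>)\<^sup>2 * SX"
  proof -
    have "(\<sigma> * a)\<^sup>2 * (\<Sum>j\<in>I. \<Sum>m\<in>I. (S1 j m + S2 j m)\<^sup>2) \<le> \<sigma>\<^sup>2 * (144 * SX)"
      by (rule mult_mono[OF sa q]) (auto simp: Q0)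
    moreover have "SX + \<sigma>\<^sup>2 * (144 * SX) \<le> (1 + 12 * \<sigma>)\<^sup>2 * SX"
      using s SX0 by (simp add: power2_eq_square algebra_simps)
    ultimately show ?thesis unfolding tot by linarith
  qed
  have lo: "SX \<le> (\<Sum>j\<in>I. \<Sum>m\<in>I. (norm (LX j m))\<^sup>2)"
    unfolding tot using Q0 by (simp add: sum_nonneg)
  have fX: "frob_norm J X = sqrt SX" by (simp add: frob_norm_def SX_def I_def)
  have fL: "frob_norm J LX = sqrt (\<Sum>j\<in>I. \<Sum>m\<in>I. (norm (LX j m))\<^sup>2)" by (simp add: frob_norm_def I_def)
  have "sqrt (\<Sum>j\<in>I. \<Sum>m\<in>I. (norm (LX j m))\<^sup>2) \<le> sqrt ((1 + 12 * \<sigma>)\<^sup>2 * SX)"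
    using up by (rule real_sqrt_le_mono)
  also have "\<dots> = (1 + 12 * \<sigma>) * sqrt SX" using s by (simp add: real_sqrt_mult)
  finally show ?thesis using lo unfolding LX_def[symmetric] fX fL
    by (simp add: real_sqrt_le_mono)
qed

theorem lemma4:
  fixes L0 L1 \<epsilon> :: real and l :: "real \<Rightarrow> real" and \<alpha> :: "nat \<Rightarrow> real"
  assumes "L0 < L1" and "\<epsilon> > 0"
    and "\<And>h. h > 0 \<Longrightarrow> l h > 0"
    and "((\<lambda>h. l h / h powr (2 + \<epsilon>)) \<longlongrightarrow> 0) (at_right 0)"
    and "\<And>n. 0 \<le> \<alpha> n \<and> \<alpha> n \<le> 1"
  shows "\<exists>C > 0. \<exists>h0 > 0. \<forall>J::nat. J > 0 \<longrightarrow> (L1 - L0) / real J < h0 \<longrightarrow>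
    (let h = (L1 - L0) / real J; \<sigma> = 2 * l h / h\<^sup>2 in
     \<forall>n. \<forall>X :: nat \<Rightarrow> nat \<Rightarrow> real.
       let LX = L_op J (A_mat J \<sigma> (\<alpha> n)) (\<lambda>j m. complex_of_real (X j m)) in
       1/2 * frob_norm J X \<le> (1 - C * h powr \<epsilon>) * frob_norm J X
       \<and> (1 - C * h powr \<epsilon>) * frob_norm J X \<le> frob_norm J LX
       \<and> frob_norm J LX \<le> (1 + C * h powr \<epsilon>) * frob_norm J X
       \<and> (1 + C * h powr \<epsilon>) * frob_norm J X \<le> 3/2 * frob_norm J X)"
  proof -
  have "\<forall>\<^sub>F h in at_right 0. l h / h powr (2 + \<epsilon>) < 1"
    using order_tendstoD(2)[OF assms(4)] by simp
  then obtain \<delta> where d0: "\<delta> > 0" and dP: "\<And>h. h > 0 \<Longrightarrow> h < \<delta> \<Longrightarrow> l h / h powr (2 + \<epsilon>) < 1"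
    unfolding eventually_at_right_field by auto
  define h0 where "h0 = min \<delta> ((1/48) powr (1/\<epsilon>))"
  have h00: "h0 > 0" unfolding h0_def using d0 by simp
  have "\<forall>J::nat. J > 0 \<longrightarrow> (L1 - L0) / real J < h0 \<longrightarrow> (\<forall>n. \<forall>X :: nat \<Rightarrow> nat \<Rightarrow> real.
    1/2 * frob_norm J X \<le> (1 - 24 * ((L1 - L0) / real J) powr \<epsilon>) * frob_norm J X \<and>
    (1 - 24 * ((L1 - L0) / real J) powr \<epsilon>) * frob_norm J X
         \<le> frob_norm J (L_op J (A_mat J (2 * l ((L1 - L0) / real J) / ((L1 - L0) / real J)\<^sup>2) (\<alpha> n)) (\<lambda>j m. complex_of_real (X j m))) \<and>
    frob_norm J (L_op J (A_mat J (2 * l ((L1 - L0) / real J) / ((L1 - L0) / real J)\<^sup>2) (\<alpha> n)) (\<lambda>j m. complex_of_real (X j m)))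
         \<le> (1 + 24 * ((L1 - L0) / real J) powr \<epsilon>) * frob_norm J X \<and>
    (1 + 24 * ((L1 - L0) / real J) powr \<epsilon>) * frob_norm J X \<le> 3 / 2 * frob_norm J X)"
  proof (intro allI impI)
    fix J :: nat and n and X :: "nat \<Rightarrow> nat \<Rightarrow> real"
    assume J: "J > 0" and hJ: "(L1 - L0) / real J < h0"
    define h where "h = (L1 - L0) / real J"
    define \<sigma> where "\<sigma> = 2 * l h / h\<^sup>2"
    have hpos: "h > 0" unfolding h_def using J assms(1) by simp
    have hd: "h < \<delta>" using hJ unfolding h_def h0_def by simp
    have he: "h powr \<epsilon> < 1/48"
    proof -
      have "h < (1/48) powr (1/\<epsilon>)" using hJ unfolding h_def h0_def by simp
      then have "h powr \<epsilon> < ((1/48) powr (1/\<epsilon>)) powr \<epsilon>"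
        using hpos assms(2) by (intro powr_less_mono2) auto
      also have "\<dots> = 1/48" using assms(2) by (simp add: powr_powr)
      finally show ?thesis .
    qed
    have lpos: "l h > 0" using assms(3) hpos by simp
    have s0: "\<sigma> \<ge> 0" unfolding \<sigma>_def using lpos by simp
    have sle: "\<sigma> \<le> 2 * h powr \<epsilon>"
    proof -
      have "l h / h powr (2 + \<epsilon>) < 1" using dP hpos hd by simp
      then have "l h < h powr (2 + \<epsilon>)" using hpos by (simp add: divide_less_eq)
      also have "h powr (2 + \<epsilon>) = h\<^sup>2 * h powr \<epsilon>"
        using hpos by (simp add: powr_add powr_realpow)
      finally have "l h < h\<^sup>2 * h powr \<epsilon>" .
      then show ?thesis unfolding \<sigma>_def using hpos by (simp add: divide_le_eq mult.commute)
    qed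
    have a: "0 \<le> \<alpha> n" "\<alpha> n \<le> 1" using assms(5) by auto
    define f where "f = frob_norm J X"
    have f0: "f \<ge> 0" unfolding f_def frob_norm_def by (simp add: sum_nonneg)
    note nb = norm_bound[OF s0 a, of J X]
    have hp0: "h powr \<epsilon> \<ge> 0" by simp
    show "1/2 * frob_norm J X \<le> (1 - 24 * ((L1 - L0) / real J) powr \<epsilon>) * frob_norm J X \<and>
         (1 - 24 * ((L1 - L0) / real J) powr \<epsilon>) * frob_norm J X
         \<le> frob_norm J (L_op J (A_mat J (2 * l ((L1 - L0) / real J) / ((L1 - L0) / real J)\<^sup>2) (\<alpha> n)) (\<lambda>j m. complex_of_real (X j m))) \<and>
         frob_norm J (L_op J (A_mat J (2 * l ((L1 - L0) / real J) / ((L1 - L0) / real J)\<^sup>2) (\<alpha> n)) (\<lambda>j m. complex_of_real (X j m)))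
         \<le> (1 + 24 * ((L1 - L0) / real J) powr \<epsilon>) * frob_norm J X \<and>
         (1 + 24 * ((L1 - L0) / real J) powr \<epsilon>) * frob_norm J X \<le> 3 / 2 * frob_norm J X"
      unfolding h_def[symmetric] \<sigma>_def[symmetric] f_def[symmetric]
    proof (intro conjI)
      show "1/2 * f \<le> (1 - 24 * h powr \<epsilon>) * f" using he f0 by (intro mult_right_mono) auto
      show "(1 - 24 * h powr \<epsilon>) * f \<le> frob_norm J (L_op J (A_mat J \<sigma> (\<alpha> n)) (\<lambda>j m. complex_of_real (X j m)))"
      proof -
        have "(1 - 24 * h powr \<epsilon>) * f \<le> f" using hp0 f0 by (simp add: algebra_simps)
        then show ?thesis using nb unfolding f_def[symmetric] by linarith
      qed
      have "(1 + 12 * \<sigma>) * f \<le> (1 + 24 * h powr \<epsilon>) * f" using sle f0 by (intro mult_right_mono) auto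
      then show "frob_norm J (L_op J (A_mat J \<sigma> (\<alpha> n)) (\<lambda>j m. complex_of_real (X j m))) \<le> (1 + 24 * h powr \<epsilon>) * f"
        using nb unfolding f_def[symmetric] by linarith
      show "(1 + 24 * h powr \<epsilon>) * f \<le> 3/2 * f" using he f0 by (intro mult_right_mono) auto
    qed
  qed
  then show ?thesis using h00 unfolding Let_def by (intro exI[of _ 24] exI[of _ h0]) auto
qed

end
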